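(* The set of all values $|\Lambda_h:\Gamma|$ for $\Gamma\in\mathrm{WR}(\Lambda_h)$ equals the set of integers $3^u j^2 d(2m-n)n$, where $u\in\{0,1\}$, $j,d,m,n\in\mathbb{Z}_{>0}$, $d$ is $1$ or a product of distinct primes congruent to $1$ modulo $3$, $\gcd(m,n)=1$, $3\nmid(m+n)$, and $1\le m/n\le 2$.
   Context: $\Lambda_h = \begin{bmatrix} 1 & -1/2 \\ 0 & \sqrt3/2\end{bmatrix}\mathbb{Z}^2$. For a full-rank sublattice $\Gamma\subseteq\Lambda_h$, $|\Lambda_h:\Gamma|=\det\Gamma/\det\Lambda_h$. A full-rank lattice is well-rounded (WR) if it has a basis consisting of vectors of minimal nonzero Euclidean norm; $\mathrm{WR}(\Lambda_h)$ is the set of full-rank WR sublattices of $\Lambda_h$. *)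

theory Defs
  imports "HOL-Analysis.Analysis" "HOL-Computational_Algebra.Computational_Algebra"
begin

text \<open>Vectors of the plane R^2 are represented as pairs (real * real); the product norm
is the Euclidean norm.\<close>

definition lat_span :: "real \<times> real \<Rightarrow> real \<times> real \<Rightarrow> (real \<times> real) set" where
  "lat_span v w = {x. \<exists>a b :: int. x = of_int a *\<^sub>R v + of_int b *\<^sub>R w}"

definition det2 :: "real \<times> real \<Rightarrow> real \<times> real \<Rightarrow> real" where
  "det2 v w = fst v * snd w - snd v * fst w"

definition hex_lattice :: "(real \<times> real) set" where
  "hex_lattice = lat_span (1, 0) (-1/2, sqrt 3 / 2)"

definition is_lat_basis :: "(real \<times> real) set \<Rightarrow> real \<times> real \<Rightarrow> real \<times> real \<Rightarrow> bool" where
  "is_lat_basis L v w \<longleftrightarrow> det2 v w \<noteq> 0 \<and> L = lat_span v w"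

definition full_rank_sublattice_hex :: "(real \<times> real) set \<Rightarrow> bool" where
  "full_rank_sublattice_hex L \<longleftrightarrow> L \<subseteq> hex_lattice \<and> (\<exists>v w. is_lat_basis L v w)"

definition lat_det :: "(real \<times> real) set \<Rightarrow> real" where
  "lat_det L = (THE d. \<exists>v w. is_lat_basis L v w \<and> d = \<bar>det2 v w\<bar>)"

definition hex_index :: "(real \<times> real) set \<Rightarrow> real" where
  "hex_index L = lat_det L / lat_det hex_lattice"

definition well_rounded :: "(real \<times> real) set \<Rightarrow> bool" where
  "well_rounded L \<longleftrightarrow> (\<exists>v w. is_lat_basis L v w \<and>
      (\<forall>x\<in>L. x \<noteq> 0 \<longrightarrow> norm v \<le> norm x) \<and>
      (\<forall>x\<in>L. x \<noteq> 0 \<longrightarrow> norm w \<le> norm x))"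

definition WR_hex :: "(real \<times> real) set set" where
  "WR_hex = {L. full_rank_sublattice_hex L \<and> well_rounded L}"

end

theory Submission
  imports Defs "HOL-Number_Theory.Number_Theory"
begin

definition Qf :: "int \<Rightarrow> int \<Rightarrow> int" where "Qf a b = a^2 - a*b + b^2"

lemma Q_mult: "Qf a b * Qf c d = Qf (a*c - b*d) (a*d + b*c - b*d)"
  unfolding Qf_def by (simp add: algebra_simps power2_eq_square)

lemma fermat_int:
  fixes p a :: int
  assumes "prime p" "\<not> p dvd a"
  shows "p dvd a ^ (nat p - 1) - 1"
proof -
  obtain p' where pp: "p = int p'" using assms(1) by (metis prime_gt_0_int order_less_le pos_int_cases)
  have pr: "prime p'" using assms(1) pp by simp
  define a' where "a' = nat (a mod p)"
  have ia: "int a' = a mod p" unfolding a'_def using pp pr prime_gt_0_nat by simp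
  have "\<not> p' dvd a'"
  proof
    assume "p' dvd a'"
    then have "p dvd int a'" using pp by simp
    then have "p dvd a mod p" using ia by simp
    then show False using assms(2) by (simp add: dvd_mod_iff)
  qed
  then have "[a' ^ (p' - 1) = 1] (mod p')" using fermat_theorem pr by blast
  then have "[int a' ^ (p' - 1) = 1] (mod int p')"
    by (metis cong_int_iff of_nat_1 of_nat_power)
  then have "[(a mod p) ^ (nat p - 1) = 1] (mod p)" using ia pp by simp
  then have "[a ^ (nat p - 1) = 1] (mod p)"
    by (metis cong_def power_mod)
  then show ?thesis by (simp add: cong_iff_dvd_diff dvd_diff_commute)
qed

lemma cube_root:
  fixes p :: int
  assumes "prime p" "p mod 3 = 1"
  shows "\<exists>x. p dvd x^2 + x + 1"
proof -
  obtain p' where pp: "p = int p'" using assms(1) by (metis prime_gt_0_int order_less_le pos_int_cases)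
  have pr: "prime p'" using assms(1) pp by simp
  have "3 dvd p' - 1" using assms(2) pp prime_gt_1_nat[OF pr]
    by (simp add: dvd_def) presburger
  then have "card {x\<in>totatives p'. ord p' x = 3} = totient 3"
    using prime_card_elements_with_ord_eq_totient[of p' 3] pr prime_gt_1_nat[OF pr] by simp
  also have "totient 3 = 2" using totient_prime[of 3] by simp
  finally have "card {x\<in>totatives p'. ord p' x = 3} = 2" .
  then have "{x\<in>totatives p'. ord p' x = 3} \<noteq> {}" by (metis card.empty zero_neq_numeral)
  then obtain x where x: "ord p' x = 3" by auto
  have c1: "[x ^ 3 = 1] (mod p')" using ord_divides[of x 3 p'] x by simp
  have c2: "\<not> [x = 1] (mod p')" using ord_eq_Suc_0_iff[of p' x] x by simp
  have d1: "p dvd int x ^ 3 - 1" using c1 pp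
    by (metis cong_int_iff cong_iff_dvd_diff of_nat_1 of_nat_power)
  have d2: "\<not> p dvd int x - 1" using c2 pp
    by (metis cong_int_iff cong_iff_dvd_diff of_nat_1)
  have "int x ^ 3 - 1 = (int x - 1) * (int x ^ 2 + int x + 1)" by (simp add: algebra_simps power2_eq_square power3_eq_cube)
  then have "p dvd (int x - 1) * (int x ^ 2 + int x + 1)" using d1 by simp
  then have "p dvd int x ^ 2 + int x + 1" using d2 assms(1) prime_dvd_mult_iff by blast
  then show ?thesis by blast
qed

lemma sqrt_ex: "\<exists>s::nat. s^2 \<le> n \<and> n < (s+1)^2"
proof (induction n)
  case 0 then show ?case by (intro exI[of _ 0]) simp
next
  case (Suc n)
  then obtain s where s: "s^2 \<le> n" "n < (s+1)^2" by blast
  show ?case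
  proof (cases "Suc n < (s+1)^2")
    case True then show ?thesis using s by (intro exI[of _ s]) simp
  next
    case False
    have e: "(s + 2)^2 = (s + 1)^2 + (2 * s + 3)" by (simp add: power2_eq_square)
    show ?thesis using False s e by (intro exI[of _ "s+1"]) (simp add: algebra_simps)
  qed
qed

lemma odd_form:
  fixes a b :: int
  assumes "odd a \<or> odd b"
  shows "odd (a^2 + a*b + b^2)"
  using assms by (auto simp: even_add even_mult_iff)

lemma thue:
  fixes p x :: int
  assumes pr: "prime p" and dv: "p dvd x^2 + x + 1"
  shows "\<exists>a b. Qf a b = p"
proof -
  have p1: "p > 1" using pr prime_gt_1_int by blast
  obtain s :: nat where s: "s^2 \<le> nat p" "nat p < (s+1)^2" using sqrt_ex by blast
  define A where "A = {0..s} \<times> {0..s}"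
  define f where "f = (\<lambda>(u::nat,v::nat). (int u + x * int v) mod p)"
  have fA: "f ` A \<subseteq> {0..<p}" unfolding f_def using p1 by auto
  have "card (f ` A) \<le> card {0..<p}" by (rule card_mono[OF _ fA]) simp
  also have "card {0..<p} = nat p" by simp
  also have "nat p < card A" unfolding A_def using s by (simp add: power2_eq_square)
  finally have "\<not> inj_on f A" using pigeonhole by blast
  then obtain u v u' v' where uv: "(u,v) \<in> A" "(u',v') \<in> A" "(u,v) \<noteq> (u',v')" "f (u,v) = f (u',v')"
    unfolding inj_on_def by auto
  define a where "a = int u - int u'"
  define b where "b = int v' - int v"
  have ab0: "a \<noteq> 0 \<or> b \<noteq> 0" using uv(3) unfolding a_def b_def by auto
  have "p dvd (int u + x * int v) - (int u' + x * int v')"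
    using uv(4) unfolding f_def by (simp add: mod_eq_dvd_iff)
  then have dab: "p dvd a - x * b" unfolding a_def b_def by (simp add: algebra_simps)
  have "a^2 + a*b + b^2 = (a - x*b) * (a + x*b + b) + b^2 * (x^2 + x + 1)"
    by (simp add: algebra_simps power2_eq_square)
  then have dq: "p dvd a^2 + a*b + b^2" using dab dv by simp
  have ba: "\<bar>a\<bar> \<le> int s" "\<bar>b\<bar> \<le> int s" using uv(1,2) unfolding A_def a_def b_def by auto
  have sp: "int s ^ 2 < p"
  proof -
    have "int (s ^ 2) \<le> int (nat p)" using s(1) by (simp only: of_nat_le_iff)
    then have "int s ^ 2 \<le> p" using p1 by simp
    moreover have "int s ^ 2 \<noteq> p"
    proof
      assume h: "int s ^ 2 = p"
      then have "int s dvd p" by (metis dvd_triv_left power2_eq_square)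
      then have "int s = 1 \<or> int s = p" using pr unfolding prime_int_iff by (meson of_nat_0_le_iff)
      then show False using h p1 by (auto simp: power2_eq_square)
    qed
    ultimately show ?thesis by simp
  qed
  have "a^2 + a*b + b^2 \<le> 3 * int s ^ 2"
  proof -
    have "a^2 \<le> int s ^2" using power_mono[OF ba(1), of 2] by simp
    have "b^2 \<le> int s ^2" using power_mono[OF ba(2), of 2] by simp
    moreover have "\<bar>a*b\<bar> \<le> int s * int s" unfolding abs_mult
      using mult_mono[OF ba(1) ba(2)] by simp
    moreover have "a*b \<le> \<bar>a*b\<bar>" by simp
    ultimately show ?thesis using \<open>a^2 \<le> int s ^2\<close> by (simp add: power2_eq_square)
  qed
  then have lt: "a^2 + a*b + b^2 < 3 * p" using sp by simp
  have pos: "a^2 + a*b + b^2 > 0"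
  proof -
    have "4 * (a^2 + a*b + b^2) = (2*a+b)^2 + 3*b^2" by (simp add: algebra_simps power2_eq_square)
    moreover have "(2*a+b)^2 + 3*b^2 > 0" 
    proof (cases "b = 0")
      case True then show ?thesis using ab0 by simp
    next
      case False then have "b^2 > 0" by simp
      moreover have "(2*a+b)^2 \<ge> 0" by simp
      ultimately show ?thesis by linarith
    qed
    ultimately show ?thesis by simp
  qed
  obtain k where k: "a^2 + a*b + b^2 = p * k" using dq by blast
  have k12: "k = 1 \<or> k = 2"
  proof -
    have "p * k > 0" using k pos by simp
    then have "k > 0" using p1 by (simp add: zero_less_mult_iff)
    moreover have "p * k < p * 3" using k lt by (simp add: mult.commute)
    then have "k < 3" using p1 by simp
    ultimately show ?thesis by auto
  qed
  have "k \<noteq> 2"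
  proof
    assume "k = 2"
    then have ev: "even (a^2 + a*b + b^2)" using k by simp
    then have "even a \<and> even b" using odd_form by blast
    then obtain a1 b1 where "a = 2*a1" "b = 2*b1" by (auto elim!: evenE)
    then have "a^2 + a*b + b^2 = 4 * (a1^2 + a1*b1 + b1^2)" by (simp add: algebra_simps power2_eq_square)
    then have "4 dvd p * 2" using k \<open>k = 2\<close> by simp
    then have "2 dvd p" by presburger
    moreover have "odd (x^2 + x + 1)" by (simp add: power2_eq_square)
    ultimately show False using dv by (metis dvd_trans)
  qed
  then have "a^2 + a*b + b^2 = p" using k k12 by simp
  then have "Qf a (-b) = p" unfolding Qf_def by simp
  then show ?thesis by blast
qed

lemma norm_rep:
  fixes d :: int
  assumes "d > 0" "\<forall>p::int. prime p \<and> p dvd d \<longrightarrow> p mod 3 = 1"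
  shows "\<exists>a b. Qf a b = d"
  using assms
proof (induction "nat d" arbitrary: d rule: less_induct)
  case less
  show ?case
  proof (cases "d = 1")
    case True then show ?thesis by (intro exI[of _ 1] exI[of _ 0]) (simp add: Qf_def)
  next
    case False
    then have "\<not> is_unit d" using less.prems(1) by simp
    then obtain p where p: "prime p" "p dvd d" using prime_divisor_exists[of d] less.prems(1) by auto
    then obtain m where m: "d = p * m" by blast
    have p1: "p > 1" using p(1) prime_gt_1_int by blast
    have m0: "m > 0" using m less.prems(1) p1 by (simp add: zero_less_mult_iff)
    have "m < d" using m m0 p1 by simp
    then have lt: "nat m < nat d" using m0 by simp
    have "\<forall>q::int. prime q \<and> q dvd m \<longrightarrow> q mod 3 = 1" using less.prems(2) m by auto
    then obtain a b where ab: "Qf a b = m" using less.hyps[OF lt m0] by blast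
    obtain x where "p dvd x^2 + x + 1" using cube_root[OF p(1)] less.prems(2) p by blast
    then obtain c e where ce: "Qf c e = p" using thue[OF p(1)] by blast
    have "Qf c e * Qf a b = d" using ab ce m by simp
    then show ?thesis unfolding Q_mult by blast
  qed
qed

lemma prim_prime:
  fixes a b r :: int
  assumes g: "gcd a b = 1" and r: "prime r" "r dvd Qf a b" "r \<noteq> 3"
  shows "r mod 3 = 1"
proof -
  have r1: "r > 1" using r(1) prime_gt_1_int by blast
  have nb: "\<not> r dvd b"
  proof
    assume "r dvd b"
    then have "r dvd a^2" using r(2) unfolding Qf_def
      by (metis dvd_add_left_iff dvd_diff dvd_mult dvd_mult2 power2_eq_square diff_add_cancel)
    then have "r dvd a" using r(1) prime_dvd_power by blast
    then have "r dvd gcd a b" using \<open>r dvd b\<close> by simp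
    then show False using g r1 by simp
  qed
  have na: "\<not> r dvd a"
  proof
    assume "r dvd a"
    then have "r dvd b^2" using r(2) unfolding Qf_def
      by (metis add_diff_cancel_left' dvd_diff dvd_mult2 power2_eq_square)
    then have "r dvd b" using r(1) prime_dvd_power by blast
    then have "r dvd gcd a b" using \<open>r dvd a\<close> by simp
    then show False using g r1 by simp
  qed
  have r3: "r mod 3 \<noteq> 0"
  proof
    assume "r mod 3 = 0"
    then have "3 dvd r" by presburger
    have pm: "\<forall>m. 0 \<le> m \<and> m dvd r \<longrightarrow> m = 1 \<or> m = r" using r(1) by (simp add: prime_int_iff)
    have "(3::int) = 1 \<or> 3 = r" using spec[OF pm, of 3] \<open>3 dvd r\<close> by simp
    then have "3 = r" by simp
    then show False using r(3) by simp
  qed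
  show ?thesis
  proof (rule ccontr)
    assume "r mod 3 \<noteq> 1"
    then have "r mod 3 = 2" using r3 by presburger
    then have "int (nat r mod 3) = 2" using r1 by (simp add: of_nat_mod)
    then have "nat r mod 3 = 2" by linarith
    then obtain q where q: "nat r - 1 = 3 * q + 1" using r1
    proof -
      have "\<forall>R::nat. R mod 3 = 2 \<longrightarrow> R - 1 = 3 * ((R - 1) div 3) + 1" by presburger
      then show ?thesis using that \<open>nat r mod 3 = 2\<close> by blast
    qed
    have fa: "r dvd a ^ (nat r - 1) - 1" using fermat_int[OF r(1) na] .
    have fb: "r dvd b ^ (nat r - 1) - 1" using fermat_int[OF r(1) nb] .
    have "a^3 + b^3 = (a+b) * Qf a b" unfolding Qf_def by (simp add: algebra_simps power2_eq_square power3_eq_cube)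
    then have s3: "r dvd a^3 - (-(b^3))" using r(2) by simp
    have "(a^3 - (-(b^3))) dvd (a^3)^q - (-(b^3))^q"
      unfolding power_diff_sumr2[of "a^3" q] by simp
    then have d1: "r dvd (a^3)^q - (-(b^3))^q" using s3 dvd_trans by blast
    define e where "e = ((-1)::int)^q"
    define T where "T = (b^3)^q"
    define A where "A = (a^3)^q"
    have mb: "(-(b^3))^q = e * T" unfolding e_def T_def
      by (metis mult_minus1 power_mult_distrib)
    have pa: "a ^ (nat r - 1) = A * a" unfolding q A_def by (simp add: power_mult power_add)
    have pb: "b ^ (nat r - 1) = T * b" unfolding q T_def by (simp add: power_mult power_add)
    have d2: "r dvd (A - e * T) * a" using d1 mb A_def by simp
    have eq: "T * (b - e * a) = (T * b - 1) - (A * a - 1) + (A - e * T) * a" by (simp add: algebra_simps)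
    have "r dvd (T * b - 1) - (A * a - 1) + (A - e * T) * a"
      using dvd_add[OF dvd_diff[OF fb[unfolded pb] fa[unfolded pa]] d2] .
    then have "r dvd T * (b - e * a)" unfolding eq .
    moreover have "\<not> r dvd T" unfolding T_def using nb r(1) prime_dvd_power by (metis power_mult)
    ultimately have dm: "r dvd b - e * a" using r(1) prime_dvd_mult_iff by blast
    have "e = 1 \<or> e = -1" unfolding e_def by (cases "even q") auto
    then show False
    proof
      assume e1: "e = 1"
      have "Qf a b = a^2 + (b - a) * b" unfolding Qf_def by (simp add: algebra_simps power2_eq_square)
      then have "r dvd a^2" using r(2) dm e1
        by (metis dvd_add_left_iff dvd_mult2 mult_1)
      then show False using na r(1) prime_dvd_power by blast
    next
      assume e1: "e = -1"
      have "Qf a b = 3 * a^2 + (b + a) * (b - 2 * a)" unfolding Qf_def by (simp add: algebra_simps power2_eq_square)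
      then have "r dvd 3 * a^2" using r(2) dm e1
        by (metis diff_minus_eq_add dvd_add_left_iff dvd_mult2 mult_minus1)
      then have "r dvd 3 \<or> r dvd a^2" using r(1) prime_dvd_mult_iff by blast
      moreover have "\<not> r dvd 3"
      proof
        assume "r dvd 3"
        then have "r \<le> 3" by (simp add: zdvd_imp_le)
        moreover have "r \<noteq> 2" using \<open>r dvd 3\<close> by auto
        ultimately have "r = 3" using r1 by simp
        then show False using r(3) by simp
      qed
      ultimately show False using na r(1) prime_dvd_power by blast
    qed
  qed
qed

definition FormSet :: "real set" where
 "FormSet = {real_of_int (3 ^ u * j ^ 2 * d * (2 * m - n) * n) | u j d m n :: int.
       u \<in> {0, 1} \<and> j > 0 \<and> d > 0 \<and> m > 0 \<and> n > 0 \<and>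
       squarefree d \<and> (\<forall>p::int. prime p \<and> p dvd d \<longrightarrow> p mod 3 = 1) \<and>
       gcd m n = 1 \<and> \<not> (3 dvd (m + n)) \<and>
       1 \<le> real_of_int m / real_of_int n \<and> real_of_int m / real_of_int n \<le> 2}"

lemma mk_form:
  fixes x y J d :: int and u :: nat
  assumes "u \<in> {0,1}" "J > 0" "d > 0" "squarefree d" "\<forall>p::int. prime p \<and> p dvd d \<longrightarrow> p mod 3 = 1"
    "x > 0" "y > 0" "y \<le> x" "x \<le> 3*y" "even (x+y)" "\<not> 3 dvd x" "gcd ((x+y) div 2) y = 1"
  shows "real_of_int (3^u*J^2*d*x*y) \<in> FormSet"
proof -
  define m where "m = (x+y) div 2"
  have xm: "x = 2*m - y" using assms(10) unfolding m_def by (elim evenE) simp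
  have m0: "m > 0" using assms(6,7) xm by simp
  have "\<not> 3 dvd (m + y)"
  proof
    assume "3 dvd (m+y)"
    then have "3 dvd 2*(m+y) - 3*y" using dvd_diff[OF dvd_mult[of 3 "m+y" 2] dvd_triv_left[of 3 y]] by blast
    moreover have "2*(m+y) - 3*y = x" using xm by simp
    ultimately show False using assms(11) by simp
  qed
  moreover have "1 \<le> real_of_int m / real_of_int y" using assms(7,8) xm by simp
  moreover have "real_of_int m / real_of_int y \<le> 2" using assms(7,9) xm by (simp add: divide_le_eq)
  moreover have "real_of_int (3^u*J^2*d*x*y) = real_of_int (3^u*J^2*d*(2*m-y)*y)" using xm by simp
  moreover have "gcd m y = 1" using assms(12) unfolding m_def .
  ultimately show ?thesis unfolding FormSet_def mem_Collect_eq
    using assms(1-5,7) m0 by (intro exI[of _ u] exI[of _ J] exI[of _ d] exI[of _ m] exI[of _ y]) (intro conjI; assumption)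
qed

lemma helper1:
  fixes x y :: int
  assumes "odd x" "odd y" "coprime x y"
  shows "gcd ((x+y) div 2) y = 1"
proof -
  define m where "m = (x+y) div 2"
  have "even (x+y)" using assms(1,2) by simp
  then have xm: "x = 2*m - y" unfolding m_def by (elim evenE) simp
  have "gcd m y dvd 2*m - y" by (intro dvd_diff dvd_mult) auto
  then have d1: "gcd m y dvd x" using xm by simp
  have "gcd m y dvd gcd x y" by (rule gcd_greatest[OF d1 gcd_dvd2])
  moreover have "gcd x y = 1" using assms(3) by (simp add: coprime_iff_gcd_eq_1)
  ultimately have "gcd m y dvd 1" by simp
  then have "\<bar>gcd m y\<bar> = 1" by simp
  then show ?thesis unfolding m_def by simp
qed

lemma helper2:
  fixes x y :: int
  assumes "odd (x+y)" "coprime x y"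
  shows "gcd ((2*x+2*y) div 2) (2*y) = 1"
proof -
  have e: "(2*x+2*y) div 2 = x + y" by simp
  have "coprime (x+y) y"
    using assms(2) unfolding coprime_iff_gcd_eq_1 by simp
  then have "coprime (x+y) (2*y)" using assms(1) by simp
  then show ?thesis unfolding e by (simp add: coprime_iff_gcd_eq_1)
qed

lemma sq_decomp:
  fixes R :: int
  assumes "R > 0" "\<forall>p::int. prime p \<and> p dvd R \<longrightarrow> p mod 3 = 1"
  shows "\<exists>J d. J > 0 \<and> d > 0 \<and> squarefree d \<and> (\<forall>p::int. prime p \<and> p dvd d \<longrightarrow> p mod 3 = 1) \<and> R = J^2 * d"
proof -
  define J where "J = \<bar>square_part R\<bar>"
  define d where "d = squarefree_part R"
  have R: "R = d * J^2" using squarefree_decompose[of R] unfolding J_def d_def by simp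
  have J0: "J > 0" unfolding J_def using assms(1) by simp
  have d0: "d > 0" using R assms(1) J0 by (simp add: zero_less_mult_iff)
  have "\<forall>p::int. prime p \<and> p dvd d \<longrightarrow> p mod 3 = 1"
  proof (intro allI impI)
    fix p :: int assume h: "prime p \<and> p dvd d"
    then have "p dvd R" using R by (simp add: dvd_mult2)
    then show "p mod 3 = 1" using h assms(2) by blast
  qed
  moreover have "squarefree d" unfolding d_def by simp
  ultimately show ?thesis using J0 d0 R by (intro exI[of _ J] exI[of _ d]) (simp add: mult.commute)
qed

lemma combin:
  fixes k l R :: int
  assumes kl: "k > 0" "l > 0" "even (k - l)" "l \<le> k" "k \<le> 3*l"
    and R: "R > 0" "\<forall>p::int. prime p \<and> p dvd R \<longrightarrow> p mod 3 = 1"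
  shows "real_of_int (k*l*R) \<in> FormSet"
proof -
  obtain Jr d where Jd: "Jr > 0" "d > 0" "squarefree d" "\<forall>p::int. prime p \<and> p dvd d \<longrightarrow> p mod 3 = 1" "R = Jr^2 * d"
    using sq_decomp[OF R] by blast
  define h where "h = gcd k l"
  have h0: "h > 0" unfolding h_def using kl by simp
  obtain a b where ab: "k = a * h" "l = b * h" "coprime a b"
    using gcd_coprime_exists[of k l] h0 unfolding h_def by auto
  have a0: "a > 0" using ab(1) kl(1) h0 by (simp add: zero_less_mult_iff)
  have b0: "b > 0" using ab(2) kl(2) h0 by (simp add: zero_less_mult_iff)
  have ba: "b \<le> a" using kl(4) ab h0 by simp
  have ab3: "a \<le> 3*b" using kl(5) ab h0 by simp
  have prod: "k*l*R = h^2 * Jr^2 * d * a * b" using ab Jd(5) by (simp add: algebra_simps power2_eq_square)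
  have g1: "gcd a b = 1" using ab(3) by (simp add: coprime_iff_gcd_eq_1)
  have nb: "\<not> (even a \<and> even b)"
  proof
    assume "even a \<and> even b"
    then have "2 dvd gcd a b" by simp
    then have "2 dvd (1::int)" unfolding g1 .
    then show False by simp
  qed
  show ?thesis
  proof (cases "odd a \<and> odd b")
    case True
    show ?thesis
    proof (cases "3 dvd a")
      case False
      have "real_of_int (3^0*(h*Jr)^2*d*a*b) \<in> FormSet"
        using mk_form[of 0 "h*Jr" d a b] Jd h0 a0 b0 ba ab3 True False helper1[of a b] ab(3) by simp
      then show ?thesis using prod by (simp add: power_mult_distrib)
    next
      case True3: True
      then obtain c where c: "a = 3*c" by blast
      have c0: "c > 0" using a0 c by simp
      have "odd c" using True c by simp
      have cop: "coprime b c" using ab(3) c by (simp add: coprime_commute)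
      have "\<not> 3 dvd b"
      proof
        assume "3 dvd b"
        then have "3 dvd gcd a b" using c by simp
        then have "3 dvd (1::int)" unfolding g1 .
        then show False by simp
      qed
      have "real_of_int (3^1*(h*Jr)^2*d*b*c) \<in> FormSet"
        using mk_form[of 1 "h*Jr" d b c] Jd h0 b0 c0 ba ab3 c True \<open>odd c\<close> \<open>\<not> 3 dvd b\<close> helper1[of b c] cop
        by simp
      then show ?thesis using prod c by (simp add: power_mult_distrib algebra_simps)
    qed
  next
    case False
    have he: "even h"
    proof (rule ccontr)
      assume "odd h"
      have "even ((a - b) * h)" using kl(3) ab by (simp add: algebra_simps)
      then have "even (a - b)" using \<open>odd h\<close> by simp
      then show False using False nb by auto
    qed
    then obtain h' where h': "h = 2*h'" by blast
    have h'0: "h' > 0" using h0 h' by simp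
    have oab: "odd (a + b)" using False nb by auto
    have prod2: "k*l*R = (h'*Jr)^2 * d * (2*a) * (2*b)" using prod h' by (simp add: algebra_simps power2_eq_square)
    show ?thesis
    proof (cases "3 dvd a")
      case False3: False
      have n3: "\<not> 3 dvd 2*a" using False3 by presburger
      have "real_of_int (3^0*(h'*Jr)^2*d*(2*a)*(2*b)) \<in> FormSet"
        using mk_form[of 0 "h'*Jr" d "2*a" "2*b"] Jd h'0 a0 b0 ba ab3 n3 helper2[OF oab ab(3)] by simp
      then show ?thesis using prod2 by simp
    next
      case True3: True
      then obtain c where c: "a = 3*c" by blast
      have c0: "c > 0" using a0 c by simp
      have cop: "coprime b c" using ab(3) c by (simp add: coprime_commute)
      have obc: "odd (b + c)" using oab c by presburger
      have "\<not> 3 dvd b"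
      proof
        assume "3 dvd b"
        then have "3 dvd gcd a b" using c by simp
        then have "3 dvd (1::int)" unfolding g1 .
        then show False by simp
      qed
      then have n3: "\<not> 3 dvd 2*b" by presburger
      have "real_of_int (3^1*(h'*Jr)^2*d*(2*b)*(2*c)) \<in> FormSet"
        using mk_form[of 1 "h'*Jr" d "2*b" "2*c"] Jd h'0 b0 c0 ba ab3 c n3 helper2[OF obc cop] by simp
      then show ?thesis using prod2 c by (simp add: algebra_simps)
    qed
  qed
qed

lemma not9:
  fixes a b :: int
  assumes "coprime a b"
  shows "\<not> 9 dvd Qf a b"
proof
  assume h: "9 dvd Qf a b"
  have g1: "gcd a b = 1" using assms by (simp add: coprime_iff_gcd_eq_1)
  have e: "(a+b)^2 = Qf a b + 3*(a*b)" unfolding Qf_def by (simp add: algebra_simps power2_eq_square)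
  have p3: "prime (3::int)" by simp
  have "(3::int) dvd 9" by simp
  then have "3 dvd Qf a b" using h dvd_trans by blast
  then have "3 dvd (a+b)^2" unfolding e by simp
  then have s3: "3 dvd a+b" using p3 prime_dvd_power by blast
  then have "9 dvd (a+b)^2" by (auto simp: power2_eq_square)
  then have "9 dvd 3*(a*b)" using h e by (metis add_diff_cancel_left' dvd_diff)
  then have "3 dvd a*b" by presburger
  then have "3 dvd a \<or> 3 dvd b" using p3 prime_dvd_mult_iff by blast
  then have "3 dvd a \<and> 3 dvd b" using s3 by (metis add_diff_cancel_left' add_diff_cancel_right' dvd_diff)
  then have "3 dvd gcd a b" by simp
  then have "3 dvd (1::int)" unfolding g1 .
  then show False by simp
qed

lemma sup_int:
  fixes u :: nat and j d m n :: int
  assumes "u \<in> {0,1}" "j > 0" "d > 0" "m > 0" "n > 0"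
    "\<forall>p::int. prime p \<and> p dvd d \<longrightarrow> p mod 3 = 1"
    "1 \<le> real_of_int m / real_of_int n" "real_of_int m / real_of_int n \<le> 2"
  shows "\<exists>a b c e. Qf a b = Qf c e \<and> Qf (a-c) (b-e) \<ge> Qf a b \<and> Qf (a+c) (b+e) \<ge> Qf a b
     \<and> a*e - b*c \<noteq> 0 \<and> \<bar>a*e - b*c\<bar> = 3^u*j^2*d*(2*m-n)*n"
proof -
  have nm: "n \<le> m" using assms(5,7) by (simp add: le_divide_eq)
  have mn: "m \<le> 2*n" using assms(5,8) by (simp add: divide_le_eq)
  obtain a0 b0 where ab0: "Qf a0 b0 = d" using norm_rep[OF assms(3,6)] by blast
  obtain k l where kl: "k > 0" "l > 0" "l \<le> k" "k \<le> 3*l" "even (k - l)" "k * l = 3^u*j^2*(2*m-n)*n"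
  proof (cases "u = 0")
    case True
    show ?thesis
      apply (rule that[of "j*(2*m-n)" "j*n"])
      using assms(2,5) nm mn True by (auto simp: algebra_simps power2_eq_square mult_le_cancel_left_pos)
  next
    case False
    then have u1: "u = 1" using assms(1) by simp
    show ?thesis
      apply (rule that[of "3*j*n" "j*(2*m-n)"])
      using assms(2,5) nm mn u1 by (auto simp: algebra_simps power2_eq_square mult_le_cancel_left_pos)
  qed
  obtain e where e: "k = l + 2*e" using kl(5) by (metis add_diff_cancel_left' dvd_def diff_add_cancel)
  define v1 where "v1 = (l+e)*a0 - l*b0"
  define v2 where "v2 = l*a0 + e*b0"
  define w1 where "w1 = e*a0 + l*b0"
  define w2 where "w2 = (l+e)*b0 - l*a0"
  have Q1: "Qf v1 v2 = Qf w1 w2" unfolding v1_def v2_def w1_def w2_def Qf_def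
    by (simp add: algebra_simps power2_eq_square)
  have det: "v1*w2 - v2*w1 = - (k*l*Qf a0 b0)" unfolding v1_def v2_def w1_def w2_def Qf_def e
    by (simp add: algebra_simps power2_eq_square)
  have Qv: "4 * Qf v1 v2 = (k^2 + 3*l^2) * Qf a0 b0" unfolding v1_def v2_def w1_def w2_def Qf_def e
    by (simp add: algebra_simps power2_eq_square)
  have Qm: "Qf (v1-w1) (v2-w2) = 3*l^2 * Qf a0 b0" unfolding v1_def v2_def w1_def w2_def Qf_def e
    by (simp add: algebra_simps power2_eq_square)
  have Qp: "Qf (v1+w1) (v2+w2) = k^2 * Qf a0 b0" unfolding v1_def v2_def w1_def w2_def Qf_def e
    by (simp add: algebra_simps power2_eq_square)
  have k2: "k^2 \<le> 9 * l^2"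
  proof -
    have "k^2 \<le> (3*l)^2" using kl(1,4) by (intro power_mono) auto
    then show ?thesis by (simp add: power_mult_distrib)
  qed
  have l2: "l^2 \<le> k^2" using kl(2,3) by (intro power_mono) auto
  have d0: "Qf a0 b0 > 0" using ab0 assms(3) by simp
  have "(k^2 + 3*l^2) * Qf a0 b0 \<le> (12*l^2) * Qf a0 b0" using k2 d0 by (intro mult_right_mono) auto
  then have i1: "4 * Qf (v1-w1) (v2-w2) \<ge> 4 * Qf v1 v2" unfolding Qm Qv by (simp add: algebra_simps)
  have "(k^2 + 3*l^2) * Qf a0 b0 \<le> (4*k^2) * Qf a0 b0" using l2 d0 by (intro mult_right_mono) auto
  then have i2: "4 * Qf (v1+w1) (v2+w2) \<ge> 4 * Qf v1 v2" unfolding Qp Qv by (simp add: algebra_simps)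
  have "\<bar>v1*w2 - v2*w1\<bar> = k*l*d" unfolding det using kl(1,2) d0 ab0 by simp
  also have "\<dots> = (3^u*j^2*(2*m-n)*n)*d" using kl(6) by simp
  also have "\<dots> = 3^u*j^2*d*(2*m-n)*n" by (simp add: algebra_simps)
  finally have "\<bar>v1*w2 - v2*w1\<bar> = 3^u*j^2*d*(2*m-n)*n" .
  moreover have "v1*w2 - v2*w1 \<noteq> 0" unfolding det using kl(1,2) d0 by simp
  ultimately show ?thesis using Q1 i1 i2 by (intro exI[of _ v1] exI[of _ v2] exI[of _ w1] exI[of _ w2]) simp
qed

lemma Q_pos: "(a::int) \<noteq> 0 \<or> b \<noteq> 0 \<Longrightarrow> Qf a b > 0"
proof -
  assume h: "a \<noteq> 0 \<or> b \<noteq> 0"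
  have "4 * Qf a b = (2*a-b)^2 + 3*b^2" unfolding Qf_def by (simp add: algebra_simps power2_eq_square)
  moreover have "(2*a-b)^2 + 3*b^2 > 0"
  proof (cases "b = 0")
    case True then show ?thesis using h by simp
  next
    case False then have "b^2 > 0" by simp
    moreover have "(2*a-b)^2 \<ge> 0" by simp
    ultimately show ?thesis by linarith
  qed
  ultimately show ?thesis by simp
qed

lemma sub_int:
  fixes a b c e :: int
  assumes eq: "Qf a b = Qf c e" and i1: "Qf (a-c) (b-e) \<ge> Qf a b" and i2: "Qf (a+c) (b+e) \<ge> Qf a b"
    and dt: "a*e - b*c \<noteq> 0"
  shows "real_of_int \<bar>a*e - b*c\<bar> \<in> FormSet"
proof -
  define s1 where "s1 = a + c"
  define s2 where "s2 = b + e"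
  define t1 where "t1 = a - c"
  define t2 where "t2 = b - e"
  have s0: "s1 \<noteq> 0 \<or> s2 \<noteq> 0"
  proof (rule ccontr)
    assume "\<not> (s1 \<noteq> 0 \<or> s2 \<noteq> 0)"
    then have "c = -a" "e = -b" unfolding s1_def s2_def by auto
    then show False using dt by (simp add: algebra_simps)
  qed
  define k where "k = gcd s1 s2"
  have k0: "k > 0" unfolding k_def using s0 by simp
  obtain p1 p2 where p: "s1 = p1 * k" "s2 = p2 * k" "coprime p1 p2"
    using gcd_coprime_exists[of s1 s2] k0 unfolding k_def by auto
  have gp: "gcd p1 p2 = 1" using p(3) by (simp add: coprime_iff_gcd_eq_1)
  have p0: "p1 \<noteq> 0 \<or> p2 \<noteq> 0" using gp by auto
  define P where "P = Qf p1 p2"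
  have P0: "P > 0" unfolding P_def using Q_pos p0 by blast
  define \<alpha> where "\<alpha> = p1 - 2*p2"
  define \<beta> where "\<beta> = 2*p1 - p2"
  have orth0: "t1*(2* s1 - s2) - t2*(s1 - 2* s2) = 2*(Qf a b - Qf c e)"
    unfolding s1_def s2_def t1_def t2_def Qf_def by (simp add: algebra_simps power2_eq_square)
  have "k * (t1*\<beta> - t2*\<alpha>) = 0" using orth0 eq unfolding \<alpha>_def \<beta>_def p by (simp add: algebra_simps)
  then have orth: "t1*\<beta> = t2*\<alpha>" using k0 by simp
  define g where "g = gcd \<alpha> \<beta>"
  have ab0: "\<alpha> \<noteq> 0 \<or> \<beta> \<noteq> 0" using p0 unfolding \<alpha>_def \<beta>_def by auto
  have g0: "g > 0" unfolding g_def using ab0 by simp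
  obtain \<alpha>' \<beta>' where ab': "\<alpha> = \<alpha>' * g" "\<beta> = \<beta>' * g" "coprime \<alpha>' \<beta>'"
    using gcd_coprime_exists[of \<alpha> \<beta>] g0 unfolding g_def by auto
  have orth': "t1*\<beta>' = t2*\<alpha>'" using orth ab' g0 by (simp add: algebra_simps)
  obtain x y where xy: "x*\<alpha>' + y*\<beta>' = 1" using bezout_int[of \<alpha>' \<beta>'] ab'(3)
    by (auto simp: coprime_iff_gcd_eq_1)
  define l where "l = x*t1 + y*t2"
  have t1l: "t1 = l * \<alpha>'"
  proof -
    have "l * \<alpha>' = x*t1*\<alpha>' + y*(t2*\<alpha>')" unfolding l_def by (simp add: algebra_simps)
    also have "\<dots> = t1 * (x*\<alpha>' + y*\<beta>')" using orth' by (simp add: algebra_simps)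
    finally show ?thesis using xy by simp
  qed
  have t2l: "t2 = l * \<beta>'"
  proof -
    have "l * \<beta>' = x*(t1*\<beta>') + y*t2*\<beta>'" unfolding l_def by (simp add: algebra_simps)
    also have "\<dots> = t2 * (x*\<alpha>' + y*\<beta>')" using orth' by (simp add: algebra_simps)
    finally show ?thesis using xy by simp
  qed
  obtain x' y' where xy': "x'*p1 + y'*p2 = 1" using bezout_int[of p1 p2] gp by auto
  have "3 = x'*(2*\<beta> - \<alpha>) + y'*(\<beta> - 2*\<alpha>)" unfolding \<alpha>_def \<beta>_def using xy'
    by (simp add: algebra_simps)
  then have "3 = g * (x'*(2*\<beta>' - \<alpha>') + y'*(\<beta>' - 2*\<alpha>'))" unfolding ab' by (simp add: algebra_simps)
  then have g3: "g dvd 3" by (metis dvd_triv_left)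
  then have "g \<le> 3" by (simp add: zdvd_imp_le)
  moreover have "g \<noteq> 2" using g3 by auto
  ultimately have g13: "g = 1 \<or> g = 3" using g0 by auto
  have godd: "odd g" using g13 by auto
  have detid: "2*(b*c - a*e) = s1*t2 - s2*t1" unfolding s1_def s2_def t1_def t2_def by (simp add: algebra_simps)
  have "g * (s1*t2 - s2*t1) = k*l*(p1*\<beta> - p2*\<alpha>)" unfolding p t1l t2l ab' by (simp add: algebra_simps)
  also have "p1*\<beta> - p2*\<alpha> = 2*P" unfolding \<alpha>_def \<beta>_def P_def Qf_def by (simp add: algebra_simps power2_eq_square)
  finally have "g * (2*(b*c - a*e)) = k*l*(2*P)" using detid by simp
  then have D: "g * (b*c - a*e) = k*l*P" by (simp add: algebra_simps)
  have Qs: "Qf s1 s2 = k^2 * P" unfolding p P_def Qf_def by (simp add: algebra_simps power2_eq_square)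
  have Qab: "g^2 * Qf \<alpha>' \<beta>' = 3 * P" proof -
    have "Qf \<alpha> \<beta> = 3 * P" unfolding \<alpha>_def \<beta>_def P_def Qf_def by (simp add: algebra_simps power2_eq_square)
    then show ?thesis unfolding ab' Qf_def by (simp add: algebra_simps power2_eq_square)
  qed
  have Qt: "Qf t1 t2 = l^2 * Qf \<alpha>' \<beta>'" unfolding t1l t2l Qf_def by (simp add: algebra_simps power2_eq_square)
  have par: "Qf s1 s2 + Qf t1 t2 = 4 * Qf a b"
    unfolding s1_def s2_def t1_def t2_def using eq unfolding Qf_def by (simp add: algebra_simps power2_eq_square)
  have w1: "Qf s1 s2 \<le> 3 * Qf t1 t2" using par i1 unfolding t1_def t2_def by simp
  have w2: "Qf t1 t2 \<le> 3 * Qf s1 s2" using par i2 unfolding s1_def s2_def by simp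
  have "even (s1 - t1)" "even (s2 - t2)" unfolding s1_def t1_def s2_def t2_def by auto
  moreover have "even (\<alpha> - \<alpha>')" "even (\<beta> - \<beta>')"
  proof -
    have "\<alpha> - \<alpha>' = \<alpha>' * (g - 1)" "\<beta> - \<beta>' = \<beta>' * (g - 1)" using ab' by (simp_all add: algebra_simps)
    then show "even (\<alpha> - \<alpha>')" "even (\<beta> - \<beta>')" using godd by auto
  qed
  moreover have "even (\<alpha> - p1)" "even (\<beta> - p2)" unfolding \<alpha>_def \<beta>_def by auto
  ultimately have "even (p1*k - l*p1)" "even (p2*k - l*p2)" unfolding p t1l t2l
    by (simp_all add: even_add even_mult_iff)
  then have "even ((k - l) * p1)" "even ((k - l) * p2)" by (simp_all add: algebra_simps)
  moreover have "\<not> (even p1 \<and> even p2)"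
  proof
    assume "even p1 \<and> even p2"
    then have "2 dvd gcd p1 p2" by simp
    then have "2 dvd (1::int)" unfolding gp .
    then show False by simp
  qed
  ultimately have ekl: "even (k - l)" by auto
  have l0: "l \<noteq> 0" using D dt g0 by auto
  define L where "L = \<bar>l\<bar>"
  have L0: "L > 0" unfolding L_def using l0 by simp
  have lL: "l^2 = L^2" unfolding L_def by simp
  have "L = l \<or> L = -l" unfolding L_def by auto
  then have ekL: "even (k - L)" using ekl by presburger
  have p3: "prime (3::int)" by simp
  have P3: "3 dvd P \<Longrightarrow> 3 dvd \<alpha> \<and> 3 dvd \<beta>"
  proof -
    assume "3 dvd P"
    moreover have "(p1+p2)^2 = P + 3*(p1*p2)" unfolding P_def Qf_def by (simp add: algebra_simps power2_eq_square)
    ultimately have "3 dvd (p1+p2)^2" by simp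
    then have h: "3 dvd p1+p2" using p3 prime_dvd_power by blast
    have "\<alpha> = (p1+p2) - 3*p2" "\<beta> = 2*(p1+p2) - 3*p2" unfolding \<alpha>_def \<beta>_def by simp_all
    then show "3 dvd \<alpha> \<and> 3 dvd \<beta>" using h by presburger
  qed
  have A3: "3 dvd \<alpha> \<Longrightarrow> 3 dvd P"
  proof -
    assume "3 dvd \<alpha>"
    then have h: "3 dvd p1+p2" unfolding \<alpha>_def by presburger
    have "P = (p1+p2)^2 - 3*(p1*p2)" unfolding P_def Qf_def by (simp add: algebra_simps power2_eq_square)
    then show "3 dvd P" using h by (simp add: power2_eq_square)
  qed
  from g13 show ?thesis
  proof
    assume g1: "g = 1"
    have n3: "\<not> 3 dvd P"
    proof
      assume "3 dvd P"
      then have "3 dvd \<alpha> \<and> 3 dvd \<beta>" using P3 by blast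
      then have "3 dvd g" unfolding g_def by simp
      then show False using g1 by simp
    qed
    have pr: "\<forall>r::int. prime r \<and> r dvd P \<longrightarrow> r mod 3 = 1"
    proof (intro allI impI)
      fix r :: int assume h: "prime r \<and> r dvd P"
      then have "r \<noteq> 3" using n3 by auto
      then show "r mod 3 = 1" using prim_prime[OF gp] h unfolding P_def by blast
    qed
    have QA: "Qf \<alpha>' \<beta>' = 3*P" using Qab g1 by simp
    have "k^2 * P \<le> 3 * (l^2 * (3*P))" using w1 unfolding Qs Qt QA .
    also have "3 * (l^2 * (3*P)) = (3*L)^2 * P" unfolding lL by (simp add: power_mult_distrib)
    finally have "k^2 \<le> (3*L)^2" by (rule mult_right_le_imp_le) (use P0 in auto)
    then have kL: "k \<le> 3*L" by (rule power2_le_imp_le) (use L0 in auto)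
    have "l^2 * (3*P) \<le> 3 * (k^2 * P)" using w2 unfolding Qs Qt QA .
    also have "3 * (k^2 * P) = k^2 * (3*P)" by simp
    finally have "L^2 * (3*P) \<le> k^2 * (3*P)" unfolding lL .
    then have "L^2 \<le> k^2" by (rule mult_right_le_imp_le) (use P0 in auto)
    then have Lk: "L \<le> k" by (rule power2_le_imp_le) (use k0 in auto)
    have "real_of_int (k*L*P) \<in> FormSet" using combin[OF k0 L0 ekL Lk kL P0 pr] .
    moreover have "\<bar>a*e - b*c\<bar> = k*L*P"
    proof -
      have "a*e - b*c = -(k*l*P)" using D g1 by simp
      then have "\<bar>a*e - b*c\<bar> = \<bar>k\<bar>*\<bar>l\<bar>*\<bar>P\<bar>" by (simp add: abs_mult)
      then show ?thesis using k0 P0 unfolding L_def by simp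
    qed
    ultimately show ?thesis by simp
  next
    assume g3: "g = 3"
    have "3 dvd \<alpha>" using ab'(1) g3 by simp
    then have "3 dvd P" using A3 by blast
    then obtain R where R: "P = 3*R" by blast
    have R0: "R > 0" using P0 R by simp
    have pr: "\<forall>r::int. prime r \<and> r dvd R \<longrightarrow> r mod 3 = 1"
    proof (intro allI impI)
      fix r :: int assume h: "prime r \<and> r dvd R"
      have "r \<noteq> 3"
      proof
        assume "r = 3"
        then have "3 dvd R" using h by simp
        then have "3*3 dvd 3*R" by (rule mult_dvd_mono[OF dvd_refl])
        then have "9 dvd P" using R by simp
        then show False using not9[OF p(3)] unfolding P_def by simp
      qed
      moreover have "r dvd P" using h R by simp
      ultimately show "r mod 3 = 1" using prim_prime[OF gp] h unfolding P_def by blast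
    qed
    have QA: "Qf \<alpha>' \<beta>' = R" using Qab g3 R by simp
    have "k^2 * P \<le> 3 * (l^2 * R)" using w1 unfolding Qs Qt QA .
    then have "k^2 * (3*R) \<le> L^2 * (3*R)" unfolding lL R by simp
    then have "k^2 \<le> L^2" by (rule mult_right_le_imp_le) (use R0 in auto)
    then have kL: "k \<le> L" by (rule power2_le_imp_le) (use L0 in auto)
    have "l^2 * R \<le> 3 * (k^2 * P)" using w2 unfolding Qs Qt QA .
    then have "L^2 * R \<le> (3*k)^2 * R" unfolding lL R by (simp add: power_mult_distrib)
    then have "L^2 \<le> (3*k)^2" by (rule mult_right_le_imp_le) (use R0 in auto)
    then have Lk: "L \<le> 3*k" by (rule power2_le_imp_le) (use k0 in auto)
    have ekL': "even (L - k)" using ekL by (simp add: even_add)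
    have "real_of_int (L*k*R) \<in> FormSet" using combin[OF L0 k0 ekL' kL Lk R0 pr] .
    moreover have "\<bar>a*e - b*c\<bar> = L*k*R"
    proof -
      have "3 * (b*c - a*e) = 3 * (k*l*R)" using D g3 R by (simp add: algebra_simps)
      then have "a*e - b*c = -(k*l*R)" by simp
      then have "\<bar>a*e - b*c\<bar> = \<bar>k\<bar>*\<bar>l\<bar>*\<bar>R\<bar>" by (simp add: abs_mult)
      then show ?thesis using k0 R0 unfolding L_def by simp
    qed
    ultimately show ?thesis by simp
  qed
qed

definition phi :: "int \<Rightarrow> int \<Rightarrow> real \<times> real" where
  "phi a b = (real_of_int a - real_of_int b / 2, real_of_int b * sqrt 3 / 2)"

lemma phi_add: "phi a b + phi c d = phi (a+c) (b+d)"
  unfolding phi_def by (simp add: algebra_simps add_divide_distrib)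

lemma phi_scale: "of_int z *\<^sub>R phi a b = phi (z*a) (z*b)"
  unfolding phi_def by (simp add: algebra_simps)

lemma phi_diff: "phi a b - phi c d = phi (a-c) (b-d)"
  unfolding phi_def by (simp add: algebra_simps diff_divide_distrib)

lemma phi_lin: "of_int x *\<^sub>R phi a b + of_int y *\<^sub>R phi c d = phi (x*a + y*c) (x*b + y*d)"
  unfolding phi_scale phi_add ..

lemma norm_phi_sq: "(norm (phi a b))^2 = real_of_int (Qf a b)"
proof -
  have s3: "sqrt 3 * sqrt 3 = (3::real)" by simp
  have "(norm (phi a b))^2 = (real_of_int a - real_of_int b / 2)^2 + (real_of_int b * sqrt 3 / 2)^2"
    unfolding power2_norm_eq_inner phi_def by (simp add: power2_eq_square)
  also have "\<dots> = real_of_int (Qf a b)" unfolding Qf_def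
    by (simp add: power2_eq_square algebra_simps s3 add_divide_distrib)
  finally show ?thesis .
qed

lemma norm_phi: "norm (phi a b) = sqrt (real_of_int (Qf a b))"
  using norm_phi_sq[of a b] by (metis norm_ge_zero real_sqrt_unique)

lemma norm_phi_le: "norm (phi a b) \<le> norm (phi c d) \<longleftrightarrow> Qf a b \<le> Qf c d"
proof -
  have "norm (phi a b) \<le> norm (phi c d) \<longleftrightarrow> (norm (phi a b))^2 \<le> (norm (phi c d))^2"
    by (simp add: abs_le_square_iff[symmetric])
  then show ?thesis unfolding norm_phi_sq by simp
qed

lemma det_phi: "det2 (phi a b) (phi c d) = real_of_int (a*d - b*c) * sqrt 3 / 2"
  unfolding det2_def phi_def by (simp add: algebra_simps diff_divide_distrib)

lemma hex_eq: "hex_lattice = {phi a b | a b. True}"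
proof -
  have "\<And>a b :: int. of_int a *\<^sub>R ((1::real), (0::real)) + of_int b *\<^sub>R (-1/2, sqrt 3 / 2) = phi a b"
    unfolding phi_def by simp
  then show ?thesis unfolding hex_lattice_def lat_span_def by auto
qed

lemma in_hex: "x \<in> hex_lattice \<Longrightarrow> \<exists>a b. x = phi a b"
  unfolding hex_eq by auto

lemma det2_lin: "det2 (of_int a *\<^sub>R v + of_int b *\<^sub>R w) (of_int c *\<^sub>R v + of_int d *\<^sub>R w)
   = real_of_int (a*d - b*c) * det2 v w"
  unfolding det2_def by (simp add: algebra_simps)

lemma basis_det_unique:
  assumes "is_lat_basis L v w" "is_lat_basis L v' w'"
  shows "\<bar>det2 v w\<bar> = \<bar>det2 v' w'\<bar>"
proof -
  have L: "L = lat_span v w" "L = lat_span v' w'" and n: "det2 v w \<noteq> 0" "det2 v' w' \<noteq> 0"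
    using assms unfolding is_lat_basis_def by auto
  have mem: "x \<in> lat_span x y" "y \<in> lat_span x y" for x y
    unfolding lat_span_def
    by (rule CollectI, rule exI[of _ 1], rule exI[of _ 0], simp)
       (rule CollectI, rule exI[of _ 0], rule exI[of _ 1], simp)
  have "v' \<in> lat_span v w" "w' \<in> lat_span v w" using mem L by metis+
  then obtain a b c d where ab: "v' = of_int a *\<^sub>R v + of_int b *\<^sub>R w" "w' = of_int c *\<^sub>R v + of_int d *\<^sub>R w"
    unfolding lat_span_def by auto
  have "v \<in> lat_span v' w'" "w \<in> lat_span v' w'" using mem L by metis+
  then obtain a' b' c' d' where ab': "v = of_int a' *\<^sub>R v' + of_int b' *\<^sub>R w'" "w = of_int c' *\<^sub>R v' + of_int d' *\<^sub>R w'"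
    unfolding lat_span_def by auto
  have e1: "det2 v' w' = real_of_int (a*d - b*c) * det2 v w" unfolding ab det2_lin ..
  have e2: "det2 v w = real_of_int (a'*d' - b'*c') * det2 v' w'" unfolding ab' det2_lin ..
  have "det2 v w = real_of_int (a'*d' - b'*c') * (real_of_int (a*d - b*c) * det2 v w)"
    using e2 unfolding e1 .
  then have "real_of_int ((a'*d' - b'*c') * (a*d - b*c)) * det2 v w = 1 * det2 v w"
    by (simp only: of_int_mult mult.assoc mult_1)
  then have "real_of_int ((a'*d' - b'*c') * (a*d - b*c)) = 1"
    using mult_right_cancel[OF n(1)] by blast
  then have "(a'*d' - b'*c') * (a*d - b*c) = 1" by (metis of_int_eq_1_iff)
  then have "\<bar>a*d - b*c\<bar> = 1" by (metis zmult_eq_1_iff abs_neg_one abs_one)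
  then have "\<bar>real_of_int (a*d - b*c)\<bar> = 1" by (metis of_int_abs of_int_1)
  then show ?thesis unfolding e1 by (simp add: abs_mult)
qed

lemma lat_det_eq:
  assumes "is_lat_basis L v w"
  shows "lat_det L = \<bar>det2 v w\<bar>"
  unfolding lat_det_def
proof (rule the_equality)
  show "\<exists>v' w'. is_lat_basis L v' w' \<and> \<bar>det2 v w\<bar> = \<bar>det2 v' w'\<bar>" using assms by blast
next
  fix d assume "\<exists>v' w'. is_lat_basis L v' w' \<and> d = \<bar>det2 v' w'\<bar>"
  then show "d = \<bar>det2 v w\<bar>" using basis_det_unique assms by metis
qed

lemma lat_det_hex: "lat_det hex_lattice = sqrt 3 / 2"
proof -
  have "is_lat_basis hex_lattice (1, 0) (-1/2, sqrt 3 / 2)"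
    unfolding is_lat_basis_def hex_lattice_def det2_def by simp
  then show ?thesis using lat_det_eq unfolding det2_def by fastforce
qed

lemma hex_index_phi:
  assumes "is_lat_basis L (phi a b) (phi c d)"
  shows "hex_index L = real_of_int \<bar>a*d - b*c\<bar>"
  unfolding hex_index_def lat_det_eq[OF assms] lat_det_hex det_phi
  by (simp add: abs_mult)

lemma int_sq_bound:
  fixes x y :: int
  assumes "x \<noteq> 0 \<or> y \<noteq> 0"
  shows "x^2 + y^2 - \<bar>x*y\<bar> \<ge> 1"
proof (cases "x = 0 \<or> y = 0")
  case True
  have sq: "(1::int) \<le> z^2" if "z \<noteq> 0" for z :: int
  proof -
    have "z^2 > 0" using that by simp
    then show ?thesis by linarith
  qed
  show ?thesis
  proof (cases "x = 0")
    case True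
    then have "y \<noteq> 0" using assms by simp
    then show ?thesis using sq[of y] True by simp
  next
    case False
    then have "y = 0" using \<open>x = 0 \<or> y = 0\<close> by simp
    then show ?thesis using sq[of x] False by simp
  qed
next
  case False
  then have "\<bar>x\<bar> \<ge> 1" "\<bar>y\<bar> \<ge> 1" by auto
  then have "1*1 \<le> \<bar>x\<bar>*\<bar>y\<bar>" by (intro mult_mono) auto
  then have "\<bar>x\<bar>*\<bar>y\<bar> \<ge> 1" by simp
  moreover have "x^2 + y^2 - \<bar>x*y\<bar> = (\<bar>x\<bar> - \<bar>y\<bar>)^2 + \<bar>x\<bar>*\<bar>y\<bar>"
    by (simp add: power2_eq_square algebra_simps abs_mult)
  moreover have "(\<bar>x\<bar> - \<bar>y\<bar>)^2 \<ge> 0" by simp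
  ultimately show ?thesis by linarith
qed

lemma wr_min:
  fixes V W :: "real \<times> real"
  assumes "norm V = norm W" "norm V \<le> norm (V - W)" "norm V \<le> norm (V + W)"
    and x: "x \<in> lat_span V W" "x \<noteq> 0"
  shows "norm V \<le> norm x"
proof -
  obtain a b :: int where xab: "x = of_int a *\<^sub>R V + of_int b *\<^sub>R W" using x(1) unfolding lat_span_def by auto
  have ab0: "a \<noteq> 0 \<or> b \<noteq> 0" using x(2) xab by auto
  define N where "N = inner V V"
  define B where "B = inner V W"
  have WW: "inner W W = N" unfolding N_def using assms(1) by (simp add: dot_square_norm)
  have "N \<le> inner (V - W) (V - W)" unfolding N_def using assms(2)
    by (simp add: dot_square_norm abs_le_square_iff[symmetric])
  then have B1: "2*B \<le> N" unfolding B_def using WW by (simp add: inner_diff inner_commute N_def)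
  have "N \<le> inner (V + W) (V + W)" unfolding N_def using assms(3)
    by (simp add: dot_square_norm abs_le_square_iff[symmetric])
  then have B2: "-(2*B) \<le> N" unfolding B_def using WW by (simp add: inner_add inner_commute N_def)
  have N0: "N \<ge> 0" unfolding N_def by simp
  have xx: "inner x x = (real_of_int a)^2 * N + 2 * (real_of_int a * real_of_int b) * B + (real_of_int b)^2 * N"
    unfolding xab B_def N_def using WW
    by (simp add: inner_add inner_commute power2_eq_square algebra_simps N_def)
  define p where "p = real_of_int a * real_of_int b"
  have "2 * p * B \<ge> - \<bar>p\<bar> * N"
  proof (cases "p \<ge> 0")
    case True
    then have "p * (-(2*B)) \<le> p * N" using mult_left_mono[OF B2] by blast
    then show ?thesis using True by simp
  next
    case False
    then have "0 \<le> -p" by simp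
    then have "(-p) * (2*B) \<le> (-p) * N" using mult_left_mono[OF B1] by blast
    then show ?thesis using False by simp
  qed
  then have "inner x x \<ge> ((real_of_int a)^2 + (real_of_int b)^2 - \<bar>p\<bar>) * N"
    unfolding xx p_def by (simp add: algebra_simps)
  moreover have "(real_of_int a)^2 + (real_of_int b)^2 - \<bar>p\<bar> \<ge> 1"
  proof -
    have "real_of_int (a^2 + b^2 - \<bar>a*b\<bar>) \<ge> 1" using int_sq_bound[OF ab0] by linarith
    then show ?thesis unfolding p_def by simp
  qed
  then have "1 * N \<le> ((real_of_int a)^2 + (real_of_int b)^2 - \<bar>p\<bar>) * N" using N0 by (rule mult_right_mono)
  ultimately have "inner x x \<ge> N" by simp
  then have "(norm V)^2 \<le> (norm x)^2" unfolding N_def by (simp add: dot_square_norm)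
  then show ?thesis by (simp add: abs_le_square_iff[symmetric])
qed

lemma lat_mem: "v \<in> lat_span v w" "w \<in> lat_span v w" "v - w \<in> lat_span v w" "v + w \<in> lat_span v w"
  unfolding lat_span_def
  by (rule CollectI, rule exI[of _ 1], rule exI[of _ 0], simp)
     (rule CollectI, rule exI[of _ 0], rule exI[of _ 1], simp,
      rule CollectI, rule exI[of _ 1], rule exI[of _ "-1"], simp,
      rule CollectI, rule exI[of _ 1], rule exI[of _ 1], simp)

lemma phi_zero: "phi x y = 0 \<Longrightarrow> x = 0 \<and> y = 0"
  unfolding phi_def zero_prod_def by auto

lemma main: "hex_index ` WR_hex = FormSet"
proof
  show "hex_index ` WR_hex \<subseteq> FormSet"
  proof
    fix z assume "z \<in> hex_index ` WR_hex"
    then obtain L where L: "L \<in> WR_hex" "z = hex_index L" by blast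
    then have sub: "L \<subseteq> hex_lattice" and wr: "well_rounded L"
      unfolding WR_hex_def full_rank_sublattice_hex_def by auto
    obtain v w where vw: "is_lat_basis L v w" "\<forall>x\<in>L. x \<noteq> 0 \<longrightarrow> norm v \<le> norm x"
      "\<forall>x\<in>L. x \<noteq> 0 \<longrightarrow> norm w \<le> norm x" using wr unfolding well_rounded_def by blast
    have Ls: "L = lat_span v w" and dn: "det2 v w \<noteq> 0" using vw(1) unfolding is_lat_basis_def by auto
    have inL: "v \<in> L" "w \<in> L" "v - w \<in> L" "v + w \<in> L" using lat_mem Ls by auto
    obtain a b where v: "v = phi a b" using in_hex inL(1) sub by blast
    obtain c e where w: "w = phi c e" using in_hex inL(2) sub by blast
    have "real_of_int (a*e - b*c) \<noteq> 0" using dn unfolding v w det_phi by auto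
    then have d0: "a*e - b*c \<noteq> 0" by (metis of_int_0)
    have "v - w \<noteq> 0"
    proof
      assume "v - w = 0"
      then have "a - c = 0 \<and> b - e = 0" unfolding v w phi_diff using phi_zero by blast
      then show False using d0 by (simp add: algebra_simps)
    qed
    then have i1: "norm v \<le> norm (v - w)" using vw(2) inL(3) by blast
    have "v + w \<noteq> 0"
    proof
      assume "v + w = 0"
      then have "a + c = 0 \<and> b + e = 0" unfolding v w phi_add using phi_zero by blast
      then have "c = -a" "e = -b" by auto
      then show False using d0 by (simp add: algebra_simps)
    qed
    then have i2: "norm v \<le> norm (v + w)" using vw(2) inL(4) by blast
    have "v \<noteq> 0" "w \<noteq> 0" using dn unfolding det2_def by auto
    then have "norm v \<le> norm w" "norm w \<le> norm v" using vw(2,3) inL(1,2) by auto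
    then have q: "Qf a b = Qf c e" unfolding v w norm_phi_le by simp
    have q1: "Qf (a-c) (b-e) \<ge> Qf a b" using i1 unfolding v w phi_diff norm_phi_le .
    have q2: "Qf (a+c) (b+e) \<ge> Qf a b" using i2 unfolding v w phi_add norm_phi_le .
    have "real_of_int \<bar>a*e - b*c\<bar> \<in> FormSet" using sub_int[OF q q1 q2 d0] .
    moreover have "z = real_of_int \<bar>a*e - b*c\<bar>" using L(2) hex_index_phi vw(1) unfolding v w by simp
    ultimately show "z \<in> FormSet" by simp
  qed
next
  show "FormSet \<subseteq> hex_index ` WR_hex"
  proof
    fix z assume "z \<in> FormSet"
    then obtain u j d m n where z: "z = real_of_int (3 ^ u * j ^ 2 * d * (2 * m - n) * n)"
      "u \<in> {0, 1}" "j > 0" "d > 0" "m > 0" "n > 0"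
       "\<forall>p::int. prime p \<and> p dvd d \<longrightarrow> p mod 3 = 1"
       "1 \<le> real_of_int m / real_of_int n" "real_of_int m / real_of_int n \<le> 2"
      unfolding FormSet_def by blast
    obtain a b c e where abce: "Qf a b = Qf c e" "Qf (a-c) (b-e) \<ge> Qf a b" "Qf (a+c) (b+e) \<ge> Qf a b"
      "a*e - b*c \<noteq> 0" "\<bar>a*e - b*c\<bar> = 3^u*j^2*d*(2*m-n)*n"
      using sup_int[OF z(2-9)] by blast
    define V where "V = phi a b"
    define W where "W = phi c e"
    define L where "L = lat_span V W"
    have r: "real_of_int (a*e - b*c) \<noteq> 0" using abce(4) by (metis of_int_eq_0_iff)
    have basis: "is_lat_basis L V W" unfolding is_lat_basis_def L_def V_def W_def det_phi
      using r by simp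
    have sub: "L \<subseteq> hex_lattice"
    proof
      fix x assume "x \<in> L"
      then obtain \<alpha> \<beta> :: int where "x = of_int \<alpha> *\<^sub>R V + of_int \<beta> *\<^sub>R W" unfolding L_def lat_span_def by auto
      then have "x = phi (\<alpha>*a + \<beta>*c) (\<alpha>*b + \<beta>*e)" unfolding V_def W_def phi_lin .
      then show "x \<in> hex_lattice" unfolding hex_eq by blast
    qed
    have nVW: "norm V = norm W" unfolding V_def W_def norm_phi using abce(1) by simp
    have n1: "norm V \<le> norm (V - W)" unfolding V_def W_def phi_diff norm_phi_le using abce(2) .
    have n2: "norm V \<le> norm (V + W)" unfolding V_def W_def phi_add norm_phi_le using abce(3) .
    have "well_rounded L" unfolding well_rounded_def
      using basis wr_min[OF nVW n1 n2] nVW unfolding L_def by metis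
    then have "L \<in> WR_hex" unfolding WR_hex_def full_rank_sublattice_hex_def using sub basis by blast
    moreover have "hex_index L = z" using hex_index_phi[OF basis[unfolded V_def W_def]] abce(5) z(1) by simp
    ultimately show "z \<in> hex_index ` WR_hex" by blast
  qed
qed

theorem corollary4p10:
  shows "hex_index ` WR_hex =
    {real_of_int (3 ^ u * j ^ 2 * d * (2 * m - n) * n) | u j d m n :: int.
       u \<in> {0, 1} \<and> j > 0 \<and> d > 0 \<and> m > 0 \<and> n > 0 \<and>
       squarefree d \<and> (\<forall>p::int. prime p \<and> p dvd d \<longrightarrow> p mod 3 = 1) \<and>
       gcd m n = 1 \<and> \<not> (3 dvd (m + n)) \<and>
       1 \<le> real_of_int m / real_of_int n \<and> real_of_int m / real_of_int n \<le> 2}"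
  using main unfolding FormSet_def .

end
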